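(* Consider the combined heat and power network described in the context, operating in Mode 2. Then, at equilibrium, the power contributions $p^G=(p^G_j)_{j\in N_e^G}$ of the electric generators and $h^G=(h^G_j)_{j\in E_h^G}$ of the conventional heat sources (together with $p^U=(D_j\omega_j)_{j\in N_e}$) are a solution of the combined heat and power optimization problem $$\min_{p^G,h^G,p^U}\ \tfrac12(p^G)^TQ_ep^G+\tfrac12(h^G)^T\tfrac{m}{C_o}Q_hh^G+\tfrac12(p^U)^TQ_up^U$$ subject to $$\mathbf 1^Tp^G=\mathbf 1^Tp^L+\mathbf 1^Tp^P+\mathbf 1^Tp^U,\qquad \mathbf 1^Th^G=\mathbf 1^Th^L-\mathbf 1^Th^P,\qquad h^P_{j_k}=C_op^P_{i_k},\ k\in H,$$ where $Q_e=\mathrm{diag}(Q_{e,jj})$, $Q_h=\mathrm{diag}(Q_{h,jj})$, $Q_u=\mathrm{diag}(1/D_j)_{j\in N_e}$.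
   Context: Power network: a directed graph $(N_e,E_e)$ with buses $N_e$ and lines $E_e$, arbitrarily oriented. $N_e^G\subseteq N_e$ is the set of generator buses and $H_e\subseteq N_e$ the set of (heat-pump converter) buses to which heat pumps are connected. Heat network: a directed graph $(N_h,E_h)$, each edge $j$ oriented along its mass flow with inlet node $s(j)$ and outlet node $t(j)$; among the edges are heat-pump edges $H_h$, conventional heat source edges $E_h^G$ and heat-load edges $E_h^L$. Heat pumps are indexed by a finite set $H$; heat pump $k\in H$ is connected to bus $i_k\in H_e$ and corresponds to edge $j_k\in H_h$. Lines: for $(i,j)\in E_e$, $\dot\eta_{ij}=\omega_i-\omega_j$, $p_{ij}=B_{ij}\sin(\eta_{ij})-p^{\mathrm{nom}}_{ij}$, $B_{ij}>0$. Buses $j\in N_e\setminus H_e$: $M_j\dot\omega_j=-p^L_j+p^G_j-p^U_j+\sum_{i:(i,j)\in E_e}p_{ij}-\sum_{k:(j,k)\in E_e}p_{jk}$, with $M_j>0$, $p^U_j=D_j\omega_j$, $D_j>0$, $p^L_j$ constant (step load change), $p^G_j=0$ for $j\notin N_e^G$. Heat-pump buses $j\in H_e$ (Mode 2): zero inertia, $0=-p^P_j+\sum_{i:(i,j)\in E_e}p_{ij}-\sum_{k:(j,k)\in E_e}p_{jk}$ and $\omega_j=m\bar T$, where $p^P_j$ is the heat pump electric power and $m$ a scalar constant. Heat network ($\rho C_p=1$), constant positive mass flows $q^E_j$, volumes $V^E_j,V^N_k>0$: $V^E_j\dot T^E_j=q^E_j(T^N_{s(j)}-T^E_j)+h^G_j+h^P_j-h^L_j$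 for each edge $j$, $V^N_k\dot T^N_k=\sum_{j:t(j)=k}q^E_j(T^E_j-T^N_k)$ for each node $k$, where $h^G_j=0$ unless $j\in E_h^G$, $h^P_j=0$ unless $j\in H_h$, $h^L_j=0$ unless $j\in E_h^L$, $h^L_j$ constant. In matrix form $V\dot T=-A_hT+\mathrm{col}(h^G+h^P-h^L,\mathbf 0)$ with $T=\mathrm{col}(T^E,T^N)$, $V=\mathrm{diag}(V^E,V^N)$, where $A_h\mathbf 1=0$, $\mathbf 1^TA_h=0$ and $A_h+A_h^T$ is positive semidefinite with a simple zero eigenvalue. Average temperature $\bar T=\mathbf 1^TVT/(\mathbf 1^TV\mathbf 1)$. Generation control: $\dot p^G_j=-p^G_j-\frac{1}{Q_{e,jj}}\omega_j$ ($j\in N_e^G$), $\dot h^G_j=-h^G_j-\frac{1}{Q_{h,jj}}\bar T$ ($j\in E_h^G$), with $Q_{e,jj},Q_{h,jj}>0$. Heat pump: $h^P_{j_k}=C_op^P_{i_k}$, $k\in H$, with constant coefficient of performance $C_o$. *)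

theory Defs
  imports Complex_Main
begin

definition avg_temp ::
  "'e set \<Rightarrow> 'n set \<Rightarrow> ('e \<Rightarrow> real) \<Rightarrow> ('n \<Rightarrow> real) \<Rightarrow> ('e \<Rightarrow> real) \<Rightarrow> ('n \<Rightarrow> real) \<Rightarrow> real" where
  "avg_temp Eh Nh VE VN TE TN =
     ((\<Sum>j\<in>Eh. VE j * TE j) + (\<Sum>k\<in>Nh. VN k * TN k)) / ((\<Sum>j\<in>Eh. VE j) + (\<Sum>k\<in>Nh. VN k))"

definition line_flow :: "('b \<times> 'b \<Rightarrow> real) \<Rightarrow> ('b \<times> 'b \<Rightarrow> real) \<Rightarrow> ('b \<times> 'b \<Rightarrow> real) \<Rightarrow> 'b \<times> 'b \<Rightarrow> real" where
  "line_flow B pnom eta e = B e * sin (eta e) - pnom e"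

definition net_inflow :: "('b \<times> 'b) set \<Rightarrow> ('b \<times> 'b \<Rightarrow> real) \<Rightarrow> 'b \<Rightarrow> real" where
  "net_inflow Ee p j = (\<Sum>e\<in>{e\<in>Ee. snd e = j}. p e) - (\<Sum>e\<in>{e\<in>Ee. fst e = j}. p e)"

definition chp_cost ::
  "'b set \<Rightarrow> 'e set \<Rightarrow> 'b set \<Rightarrow> ('b \<Rightarrow> real) \<Rightarrow> ('e \<Rightarrow> real) \<Rightarrow> ('b \<Rightarrow> real) \<Rightarrow> real \<Rightarrow> real
   \<Rightarrow> ('b \<Rightarrow> real) \<Rightarrow> ('e \<Rightarrow> real) \<Rightarrow> ('b \<Rightarrow> real) \<Rightarrow> real" where
  "chp_cost NeG EhG NeU Qe Qh D m Co pG hG pU =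
     (1/2) * (\<Sum>j\<in>NeG. Qe j * (pG j)\<^sup>2)
   + (1/2) * (\<Sum>j\<in>EhG. (m / Co) * Qh j * (hG j)\<^sup>2)
   + (1/2) * (\<Sum>j\<in>NeU. (1 / D j) * (pU j)\<^sup>2)"

definition chp_feasible ::
  "'b set \<Rightarrow> 'e set \<Rightarrow> 'b set \<Rightarrow> 'e set \<Rightarrow> 'k set \<Rightarrow> ('k \<Rightarrow> 'b) \<Rightarrow> ('k \<Rightarrow> 'e) \<Rightarrow> real
   \<Rightarrow> ('b \<Rightarrow> real) \<Rightarrow> ('e \<Rightarrow> real)
   \<Rightarrow> ('b \<Rightarrow> real) \<Rightarrow> ('e \<Rightarrow> real) \<Rightarrow> ('b \<Rightarrow> real) \<Rightarrow> ('b \<Rightarrow> real) \<Rightarrow> ('e \<Rightarrow> real) \<Rightarrow> bool" where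
  "chp_feasible NeG EhG NeU EhL H ib je Co pL hL pG hG pU pP hP \<longleftrightarrow>
     (\<Sum>j\<in>NeG. pG j) = (\<Sum>j\<in>NeU. pL j) + (\<Sum>j\<in>ib ` H. pP j) + (\<Sum>j\<in>NeU. pU j)
   \<and> (\<Sum>j\<in>EhG. hG j) = (\<Sum>j\<in>EhL. hL j) - (\<Sum>j\<in>je ` H. hP j)
   \<and> (\<forall>k\<in>H. hP (je k) = Co * pP (ib k))"

end

theory Submission
  imports Defs
begin

lemma aux_half:
  fixes a b b' c :: "'a \<Rightarrow> real"
  assumes "(\<Sum>j\<in>A. a j / 2 + b j) \<le> (\<Sum>j\<in>A. c j / 2)" and "\<And>j. j \<in> A \<Longrightarrow> b j = b' j"
  shows "1/2 * sum c A \<ge> 1/2 * sum a A + (\<Sum>j\<in>A. b' j)"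
proof -
  have "sum b A = sum b' A" using assms(2) by (rule sum.cong[OF refl])
  moreover have "(\<Sum>j\<in>A. a j / 2 + b j) = sum a A / 2 + sum b A"
    by (simp add: sum.distrib sum_divide_distrib)
  moreover have "(\<Sum>j\<in>A. c j / 2) = sum c A / 2" by (simp add: sum_divide_distrib)
  ultimately show ?thesis using assms(1) by simp
qed

theorem theorem2:
  fixes Ne NeG :: "'b set" and Ee :: "('b \<times> 'b) set"
    and Nh :: "'n set" and Eh EhG EhL :: "'e set" and s t :: "'e \<Rightarrow> 'n"
    and H :: "'k set" and ib :: "'k \<Rightarrow> 'b" and je :: "'k \<Rightarrow> 'e"
    and B pnom eta :: "'b \<times> 'b \<Rightarrow> real"
    and D Qe pL :: "'b \<Rightarrow> real" and Qh hL q VE :: "'e \<Rightarrow> real" and VN :: "'n \<Rightarrow> real"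
    and m Co :: real
    and omega pG pP :: "'b \<Rightarrow> real" and hG hP TE :: "'e \<Rightarrow> real" and TN :: "'n \<Rightarrow> real"
  defines "He \<equiv> ib ` H" and "Hh \<equiv> je ` H"
    and "Tbar \<equiv> avg_temp Eh Nh VE VN TE TN"
    and "p \<equiv> line_flow B pnom eta"
  assumes \<comment> \<open>power network structure\<close>
    finNe: "finite Ne" and Ee_sub: "Ee \<subseteq> Ne \<times> Ne"
    and conn: "\<forall>a\<in>Ne. \<forall>b\<in>Ne. (a, b) \<in> (Ee \<union> converse Ee)\<^sup>*"
    and NeG_sub: "NeG \<subseteq> Ne - He"
    and He_sub: "He \<subseteq> Ne"
    and B_pos: "\<forall>e\<in>Ee. B e > 0"
    and D_pos: "\<forall>j\<in>Ne - He. D j > 0"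
    and Qe_pos: "\<forall>j\<in>NeG. Qe j > 0"
    \<comment> \<open>heat network structure\<close>
    and finNh: "finite Nh" and finEh: "finite Eh"
    and st: "\<forall>j\<in>Eh. s j \<in> Nh \<and> t j \<in> Nh"
    and EhG_sub: "EhG \<subseteq> Eh" and EhL_sub: "EhL \<subseteq> Eh" and Hh_sub: "Hh \<subseteq> Eh"
    and q_pos: "\<forall>j\<in>Eh. q j > 0"
    and mass_cons: "\<forall>k\<in>Nh. (\<Sum>j\<in>{j\<in>Eh. t j = k}. q j) = (\<Sum>j\<in>{j\<in>Eh. s j = k}. q j)"
    and VE_pos: "\<forall>j\<in>Eh. VE j > 0" and VN_pos: "\<forall>k\<in>Nh. VN k > 0"
    and Qh_pos: "\<forall>j\<in>EhG. Qh j > 0"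
    \<comment> \<open>heat pumps\<close>
    and finH: "finite H" and inj_ib: "inj_on ib H" and inj_je: "inj_on je H"
    and m_Co: "m / Co > 0"
    \<comment> \<open>zero conventions\<close>
    and hG_zero: "\<forall>j\<in>Eh - EhG. hG j = 0"
    and hP_zero: "\<forall>j\<in>Eh - Hh. hP j = 0"
    and hL_zero: "\<forall>j\<in>Eh - EhL. hL j = 0"
    \<comment> \<open>equilibrium of the Mode 2 dynamics\<close>
    and eq_line: "\<forall>(i, j)\<in>Ee. omega i - omega j = 0"
    and eq_bus: "\<forall>j\<in>Ne - He. 0 = - pL j + (if j \<in> NeG then pG j else 0) - D j * omega j
                                   + net_inflow Ee p j"
    and eq_hp_bus: "\<forall>j\<in>He. 0 = - pP j + net_inflow Ee p j"
    and eq_hp_freq: "\<forall>j\<in>He. omega j = m * Tbar"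
    and eq_edge: "\<forall>j\<in>Eh. 0 = q j * (TN (s j) - TE j) + hG j + hP j - hL j"
    and eq_node: "\<forall>k\<in>Nh. 0 = (\<Sum>j\<in>{j\<in>Eh. t j = k}. q j * (TE j - TN k))"
    and eq_pG: "\<forall>j\<in>NeG. 0 = - pG j - omega j / Qe j"
    and eq_hG: "\<forall>j\<in>EhG. 0 = - hG j - Tbar / Qh j"
    and eq_hp: "\<forall>k\<in>H. hP (je k) = Co * pP (ib k)"
  shows "chp_feasible NeG EhG (Ne - He) EhL H ib je Co pL hL pG hG (\<lambda>j. D j * omega j) pP hP
       \<and> (\<forall>pG' hG' pU' pP' hP'.
            chp_feasible NeG EhG (Ne - He) EhL H ib je Co pL hL pG' hG' pU' pP' hP' \<longrightarrow>
            chp_cost NeG EhG (Ne - He) Qe Qh D m Co pG hG (\<lambda>j. D j * omega j)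
              \<le> chp_cost NeG EhG (Ne - He) Qe Qh D m Co pG' hG' pU')"
proof -
  have finEe: "finite Ee" using finite_subset[OF Ee_sub] finNe by blast
  have finHe: "finite He" unfolding He_def using finH by simp
  have finEhG: "finite EhG" using finite_subset[OF EhG_sub finEh] .
  have finEhL: "finite EhL" using finite_subset[OF EhL_sub finEh] .
  have finHh: "finite Hh" using finite_subset[OF Hh_sub finEh] .
  have finNG: "finite NeG" using finite_subset[OF NeG_sub] finNe by blast
  have finNU: "finite (Ne - He)" using finNe by simp
  have omconst: "omega a = omega b" if "(a, b) \<in> (Ee \<union> converse Ee)\<^sup>*" for a b
    using that
  proof (induction rule: rtrancl_induct)
    case base then show ?case by simp
  next
    case (step y z)
    then have "omega y = omega z" using eq_line by auto
    then show ?case using step by simp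
  qed
  obtain w where w: "\<forall>j\<in>Ne. omega j = w"
  proof (cases "Ne = {}")
    case True then show ?thesis using that by auto
  next
    case False
    then obtain a where a: "a \<in> Ne" by auto
    show ?thesis using that[of "omega a"] conn a omconst by metis
  qed
  have flow_tot: "(\<Sum>j\<in>Ne. net_inflow Ee p j) = 0"
  proof -
    have A: "(\<Sum>j\<in>Ne. \<Sum>e\<in>{e\<in>Ee. snd e = j}. p e) = sum p Ee"
      proof -
      have "snd ` Ee \<subseteq> Ne" using Ee_sub by auto
      from sum.group[OF finEe finNe this, of p] show ?thesis by simp
    qed
    have B: "(\<Sum>j\<in>Ne. \<Sum>e\<in>{e\<in>Ee. fst e = j}. p e) = sum p Ee"
      proof -
      have "fst ` Ee \<subseteq> Ne" using Ee_sub by auto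
      from sum.group[OF finEe finNe this, of p] show ?thesis by simp
    qed
    show ?thesis unfolding net_inflow_def sum_subtractf using A B by simp
  qed
  have split_Ne: "(\<Sum>j\<in>Ne. net_inflow Ee p j) = (\<Sum>j\<in>Ne - He. net_inflow Ee p j) + (\<Sum>j\<in>He. net_inflow Ee p j)"
    using sum.subset_diff[OF He_sub finNe] by simp
  have S1: "(\<Sum>j\<in>Ne - He. - pL j + (if j \<in> NeG then pG j else 0) - D j * omega j + net_inflow Ee p j) = 0"
    using eq_bus by simp
  have S2: "(\<Sum>j\<in>He. - pP j + net_inflow Ee p j) = 0" using eq_hp_bus by simp
  have SG: "(\<Sum>j\<in>Ne - He. (if j \<in> NeG then pG j else 0)) = (\<Sum>j\<in>NeG. pG j)"
  proof -
    have "{j\<in>Ne - He. j \<in> NeG} = NeG" using NeG_sub by auto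
    then show ?thesis using sum.inter_filter[OF finNU, of pG "\<lambda>j. j \<in> NeG"] by simp
  qed
  have feas1: "(\<Sum>j\<in>NeG. pG j) = (\<Sum>j\<in>Ne - He. pL j) + (\<Sum>j\<in>ib ` H. pP j) + (\<Sum>j\<in>Ne - He. D j * omega j)"
    using S1 S2 SG flow_tot split_Ne unfolding He_def
    by (simp add: sum.distrib sum_subtractf sum_negf)
  have TEsum: "(\<Sum>j\<in>Eh. q j * TE j) = (\<Sum>j\<in>Eh. q j * TN (s j))"
  proof -
    have "(\<Sum>j\<in>Eh. q j * TE j) = (\<Sum>k\<in>Nh. \<Sum>j\<in>{j\<in>Eh. t j = k}. q j * TE j)"
      proof -
      have "t ` Eh \<subseteq> Nh" using st by auto
      from sum.group[OF finEh finNh this, of "\<lambda>j. q j * TE j"] show ?thesis by simp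
    qed
    also have "\<dots> = (\<Sum>k\<in>Nh. TN k * (\<Sum>j\<in>{j\<in>Eh. t j = k}. q j))"
    proof (rule sum.cong[OF refl])
      fix k assume k: "k \<in> Nh"
      have "0 = (\<Sum>j\<in>{j\<in>Eh. t j = k}. q j * TE j - q j * TN k)"
        using eq_node k by (simp add: algebra_simps)
      then show "(\<Sum>j\<in>{j\<in>Eh. t j = k}. q j * TE j) = TN k * (\<Sum>j\<in>{j\<in>Eh. t j = k}. q j)"
        by (simp add: sum_subtractf sum_distrib_left mult.commute)
    qed
    also have "\<dots> = (\<Sum>k\<in>Nh. TN k * (\<Sum>j\<in>{j\<in>Eh. s j = k}. q j))"
      using mass_cons by simp
    also have "\<dots> = (\<Sum>k\<in>Nh. \<Sum>j\<in>{j\<in>Eh. s j = k}. q j * TN (s j))"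
      by (rule sum.cong[OF refl]) (simp add: sum_distrib_left mult.commute)
    also have "\<dots> = (\<Sum>j\<in>Eh. q j * TN (s j))"
      proof -
      have "s ` Eh \<subseteq> Nh" using st by auto
      from sum.group[OF finEh finNh this, of "\<lambda>j. q j * TN (s j)"] show ?thesis by simp
    qed
    finally show ?thesis .
  qed
  have E0: "(\<Sum>j\<in>Eh. q j * (TN (s j) - TE j) + hG j + hP j - hL j) = 0" using eq_edge by simp
  have EG: "(\<Sum>j\<in>Eh. hG j) = (\<Sum>j\<in>EhG. hG j)"
    using sum.mono_neutral_right[OF finEh EhG_sub] hG_zero by auto
  have EP: "(\<Sum>j\<in>Eh. hP j) = (\<Sum>j\<in>Hh. hP j)"
    using sum.mono_neutral_right[OF finEh Hh_sub] hP_zero by auto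
  have EL: "(\<Sum>j\<in>Eh. hL j) = (\<Sum>j\<in>EhL. hL j)"
    using sum.mono_neutral_right[OF finEh EhL_sub] hL_zero by auto
  have feas2: "(\<Sum>j\<in>EhG. hG j) = (\<Sum>j\<in>EhL. hL j) - (\<Sum>j\<in>je ` H. hP j)"
    using E0 EG EP EL TEsum unfolding Hh_def
    by (simp add: sum.distrib sum_subtractf right_diff_distrib)
  have feas: "chp_feasible NeG EhG (Ne - He) EhL H ib je Co pL hL pG hG (\<lambda>j. D j * omega j) pP hP"
    unfolding chp_feasible_def using feas1 feas2 eq_hp by simp
  have Co0: "Co \<noteq> 0" using m_Co by auto
  have quad: "a * y\<^sup>2 / 2 \<ge> a * x\<^sup>2 / 2 + a * x * (y - x)" if "a \<ge> 0" for a x y :: real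
  proof -
    have "a * (y - x)\<^sup>2 \<ge> 0" using that by simp
    then show ?thesis by (simp add: power2_eq_square algebra_simps)
  qed
  have opt: "chp_cost NeG EhG (Ne - He) Qe Qh D m Co pG hG (\<lambda>j. D j * omega j)
              \<le> chp_cost NeG EhG (Ne - He) Qe Qh D m Co pG' hG' pU'"
    if f': "chp_feasible NeG EhG (Ne - He) EhL H ib je Co pL hL pG' hG' pU' pP' hP'" for pG' hG' pU' pP' hP'
  proof -
    have c1: "(\<Sum>j\<in>NeG. pG' j) = (\<Sum>j\<in>Ne - He. pL j) + (\<Sum>j\<in>He. pP' j) + (\<Sum>j\<in>Ne - He. pU' j)"
      and c2: "(\<Sum>j\<in>EhG. hG' j) = (\<Sum>j\<in>EhL. hL j) - (\<Sum>j\<in>Hh. hP' j)"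
      and c3: "\<forall>k\<in>H. hP' (je k) = Co * pP' (ib k)"
      using f' unfolding chp_feasible_def He_def Hh_def by auto
    have r1: "(\<Sum>j\<in>Hh. hP' j) = Co * (\<Sum>j\<in>He. pP' j)"
      unfolding Hh_def He_def using c3
      by (simp add: sum.reindex[OF inj_je] sum.reindex[OF inj_ib] sum_distrib_left)
    have r0: "(\<Sum>j\<in>Hh. hP j) = Co * (\<Sum>j\<in>He. pP j)"
      unfolding Hh_def He_def using eq_hp
      by (simp add: sum.reindex[OF inj_je] sum.reindex[OF inj_ib] sum_distrib_left)
    define dP where "dP = (\<Sum>j\<in>He. pP' j) - (\<Sum>j\<in>He. pP j)"
    have wcase: "(w - m * Tbar) * dP = 0"
    proof (cases "H = {}")
      case True then show ?thesis unfolding dP_def He_def by simp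
    next
      case False
      then obtain k where k: "k \<in> H" by auto
      have "ib k \<in> Ne" using He_sub k unfolding He_def by auto
      then have "w = m * Tbar" using w eq_hp_freq k unfolding He_def by auto
      then show ?thesis by simp
    qed
    have T1: "(1/2) * (\<Sum>j\<in>NeG. Qe j * (pG' j)\<^sup>2) \<ge> (1/2) * (\<Sum>j\<in>NeG. Qe j * (pG j)\<^sup>2)
              + (\<Sum>j\<in>NeG. - w * (pG' j - pG j))"
    proof -
      have "(\<Sum>j\<in>NeG. Qe j * (pG j)\<^sup>2 / 2 + Qe j * pG j * (pG' j - pG j)) \<le> (\<Sum>j\<in>NeG. Qe j * (pG' j)\<^sup>2 / 2)"
        by (rule sum_mono) (use quad Qe_pos in auto)
      moreover have "Qe j * pG j = - w" if "j \<in> NeG" for j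
      proof -
        have q: "Qe j > 0" and o: "omega j / Qe j = - pG j" using that eq_pG Qe_pos by auto
        have "omega j = w" using that w NeG_sub by auto
        with q o show ?thesis by (auto simp: field_simps)
      qed
      ultimately show ?thesis by - (erule aux_half, simp)
    qed
    have T2: "(1/2) * (\<Sum>j\<in>EhG. (m / Co) * Qh j * (hG' j)\<^sup>2) \<ge> (1/2) * (\<Sum>j\<in>EhG. (m / Co) * Qh j * (hG j)\<^sup>2)
              + (\<Sum>j\<in>EhG. - (m / Co) * Tbar * (hG' j - hG j))"
    proof -
      have "(\<Sum>j\<in>EhG. (m / Co) * Qh j * (hG j)\<^sup>2 / 2 + (m / Co) * Qh j * hG j * (hG' j - hG j))
            \<le> (\<Sum>j\<in>EhG. (m / Co) * Qh j * (hG' j)\<^sup>2 / 2)"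
        proof (rule sum_mono)
          fix j assume "j \<in> EhG"
          then have "(m / Co) * Qh j \<ge> 0" using Qh_pos m_Co by (simp only: zero_le_mult_iff less_imp_le) auto
          from quad[OF this, of "hG j" "hG' j"]
          show "(m / Co) * Qh j * (hG j)\<^sup>2 / 2 + (m / Co) * Qh j * hG j * (hG' j - hG j)
            \<le> (m / Co) * Qh j * (hG' j)\<^sup>2 / 2" by (simp add: mult.assoc)
        qed
      moreover have "(m / Co) * Qh j * hG j = - (m / Co) * Tbar" if "j \<in> EhG" for j
      proof -
        have "hG j = - Tbar / Qh j" using that eq_hG by (simp add: algebra_simps)
        moreover have "Qh j > 0" using that Qh_pos by auto
        ultimately show ?thesis by (simp add: field_simps)
      qed
      ultimately show ?thesis by - (erule aux_half, simp)
    qed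
    have T3: "(1/2) * (\<Sum>j\<in>Ne - He. (1 / D j) * (pU' j)\<^sup>2) \<ge> (1/2) * (\<Sum>j\<in>Ne - He. (1 / D j) * (D j * omega j)\<^sup>2)
              + (\<Sum>j\<in>Ne - He. w * (pU' j - D j * omega j))"
    proof -
      have "(\<Sum>j\<in>Ne - He. (1 / D j) * (D j * omega j)\<^sup>2 / 2 + (1 / D j) * (D j * omega j) * (pU' j - D j * omega j))
            \<le> (\<Sum>j\<in>Ne - He. (1 / D j) * (pU' j)\<^sup>2 / 2)"
        proof (rule sum_mono)
          fix j assume "j \<in> Ne - He"
          then have "1 / D j \<ge> 0" using D_pos by (simp add: less_imp_le)
          from quad[OF this, of "D j * omega j" "pU' j"]
          show "(1 / D j) * (D j * omega j)\<^sup>2 / 2 + (1 / D j) * (D j * omega j) * (pU' j - D j * omega j)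
            \<le> (1 / D j) * (pU' j)\<^sup>2 / 2" by (simp only: mult.assoc)
        qed
      moreover have "(1 / D j) * (D j * omega j) = w" if "j \<in> Ne - He" for j
      proof -
        have "D j > 0" "omega j = w" using that D_pos w by auto
        then show ?thesis by simp
      qed
      ultimately show ?thesis by - (erule aux_half, simp)
    qed
    have lin: "(\<Sum>j\<in>NeG. - w * (pG' j - pG j)) + (\<Sum>j\<in>EhG. - (m / Co) * Tbar * (hG' j - hG j))
               + (\<Sum>j\<in>Ne - He. w * (pU' j - D j * omega j)) = (m * Tbar - w) * dP"
    proof -
      have "(\<Sum>j\<in>NeG. - w * (pG' j - pG j)) = - w * ((\<Sum>j\<in>NeG. pG' j) - (\<Sum>j\<in>NeG. pG j))"
        by (simp add: sum_distrib_left sum_subtractf sum_negf right_diff_distrib)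
      moreover have "(\<Sum>j\<in>EhG. - (m / Co) * Tbar * (hG' j - hG j)) = - (m / Co) * Tbar * ((\<Sum>j\<in>EhG. hG' j) - (\<Sum>j\<in>EhG. hG j))"
        by (simp add: sum_distrib_left sum_subtractf sum_negf right_diff_distrib)
      moreover have "(\<Sum>j\<in>Ne - He. w * (pU' j - D j * omega j)) = w * ((\<Sum>j\<in>Ne - He. pU' j) - (\<Sum>j\<in>Ne - He. D j * omega j))"
        by (simp add: sum_distrib_left sum_subtractf sum_negf right_diff_distrib)
      moreover have "(\<Sum>j\<in>EhG. hG' j) - (\<Sum>j\<in>EhG. hG j) = - Co * dP"
        using c2 feas2 r1 r0 unfolding dP_def Hh_def by (simp add: algebra_simps)
      moreover have "(\<Sum>j\<in>NeG. pG' j) - (\<Sum>j\<in>NeG. pG j) = dP + ((\<Sum>j\<in>Ne - He. pU' j) - (\<Sum>j\<in>Ne - He. D j * omega j))"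
        using c1 feas1 unfolding dP_def He_def by (simp add: algebra_simps)
      ultimately show ?thesis using Co0 by (simp add: algebra_simps)
    qed
    have "(m * Tbar - w) * dP = 0" using wcase by (metis diff_self minus_diff_eq mult_minus_left neg_0_equal_iff_equal)
    with lin have lin0: "(\<Sum>j\<in>NeG. - w * (pG' j - pG j)) + (\<Sum>j\<in>EhG. - (m / Co) * Tbar * (hG' j - hG j))
               + (\<Sum>j\<in>Ne - He. w * (pU' j - D j * omega j)) = 0" by simp
    show ?thesis unfolding chp_cost_def using T1 T2 T3 lin0 by linarith
  qed
  show ?thesis using feas opt by blast
qed

end
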